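(* Let $n$ be odd and let $0\le k,m\le n/2$. Let $N_n(k,m)$ be the number of reduced Latin squares of order $n$ of parity type $(k,m)$. Then the number of even reduced Latin squares of order $n$ of parity type $(k,m)$ equals $$\frac{km+(n-k)(n-m)}{n^2}N_n(k,m)\quad\text{if } k\equiv m \pmod 2,$$ and $$\frac{k(n-m)+m(n-k)}{n^2}N_n(k,m)\quad\text{if } k\not\equiv m \pmod 2.$$
   Context: A Latin square of order $n$ is an $n\times n$ array with entries in $[n]$, each symbol once in each row and column. Rows and columns are viewed as permutations: if symbol $i$ appears in the $j$th place of a row (column) $\sigma$, then $\sigma(i)=j$. $L$ is reduced if its first row and first column are the identity permutation. $\mathrm{par}(L)$ is the product of the signs of all rows and columns of $L$; $L$ is even if $\mathrm{par}(L)=1$. The parity type of $L$ is $(k,m)$, $0\le k,m\le n/2$, if $k$ of its rows have one sign and the other $n-k$ rows the opposite sign, and $m$ of its columns have one sign and the other $n-m$ columns the opposite sign. *)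

theory Defs
  imports Complex_Main "HOL-Combinatorics.Permutations"
begin

text \<open>Convention: a Latin square of order n is a function L :: nat => nat => nat,
  L i j = symbol in row i, column j, with rows, columns and symbols indexed by
  0..n-1 (instead of 1..n), and L i j = 0 outside the n x n array (extensionality,
  so that the set of Latin squares of order n is finite).\<close>

definition latin_square :: "nat \<Rightarrow> (nat \<Rightarrow> nat \<Rightarrow> nat) \<Rightarrow> bool" where
  "latin_square n L \<longleftrightarrow>
     (\<forall>i j. (n \<le> i \<or> n \<le> j) \<longrightarrow> L i j = 0) \<and>
     (\<forall>i<n. bij_betw (\<lambda>j. L i j) {..<n} {..<n}) \<and>
     (\<forall>j<n. bij_betw (\<lambda>i. L i j) {..<n} {..<n})"

definition reduced_latin_square :: "nat \<Rightarrow> (nat \<Rightarrow> nat \<Rightarrow> nat) \<Rightarrow> bool" where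
  "reduced_latin_square n L \<longleftrightarrow> latin_square n L \<and>
     (\<forall>j<n. L 0 j = j) \<and> (\<forall>i<n. L i 0 = i)"

definition row_perm :: "nat \<Rightarrow> (nat \<Rightarrow> nat \<Rightarrow> nat) \<Rightarrow> nat \<Rightarrow> nat \<Rightarrow> nat" where
  "row_perm n L i = (\<lambda>s. if s < n then (THE j. j < n \<and> L i j = s) else s)"

definition col_perm :: "nat \<Rightarrow> (nat \<Rightarrow> nat \<Rightarrow> nat) \<Rightarrow> nat \<Rightarrow> nat \<Rightarrow> nat" where
  "col_perm n L j = (\<lambda>s. if s < n then (THE i. i < n \<and> L i j = s) else s)"

definition par :: "nat \<Rightarrow> (nat \<Rightarrow> nat \<Rightarrow> nat) \<Rightarrow> int" where
  "par n L = (\<Prod>i<n. sign (row_perm n L i)) * (\<Prod>j<n. sign (col_perm n L j))"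

definition even_latin_square :: "nat \<Rightarrow> (nat \<Rightarrow> nat \<Rightarrow> nat) \<Rightarrow> bool" where
  "even_latin_square n L \<longleftrightarrow> par n L = 1"

text \<open>Parity type (k,m): k rows have one sign and the other n-k rows the opposite sign
  (i.e. the number of even rows is k or n-k), and likewise for columns with m.\<close>
definition parity_type :: "nat \<Rightarrow> (nat \<Rightarrow> nat \<Rightarrow> nat) \<Rightarrow> nat \<Rightarrow> nat \<Rightarrow> bool" where
  "parity_type n L k m \<longleftrightarrow>
     card {i. i < n \<and> sign (row_perm n L i) = (1::int)} \<in> {k, n - k} \<and>
     card {j. j < n \<and> sign (col_perm n L j) = (1::int)} \<in> {m, n - m}"

end

theory Submission
  imports Defs
begin


definition rowf :: "nat \<Rightarrow> (nat \<Rightarrow> nat \<Rightarrow> nat) \<Rightarrow> nat \<Rightarrow> nat \<Rightarrow> nat" where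
  "rowf n L i = (\<lambda>j. if j < n then L i j else j)"
definition colf :: "nat \<Rightarrow> (nat \<Rightarrow> nat \<Rightarrow> nat) \<Rightarrow> nat \<Rightarrow> nat \<Rightarrow> nat" where
  "colf n L j = (\<lambda>i. if i < n then L i j else i)"
definition rs :: "nat \<Rightarrow> (nat \<Rightarrow> nat \<Rightarrow> nat) \<Rightarrow> nat \<Rightarrow> int" where
  "rs n L i = sign (rowf n L i)"
definition cs :: "nat \<Rightarrow> (nat \<Rightarrow> nat \<Rightarrow> nat) \<Rightarrow> nat \<Rightarrow> int" where
  "cs n L j = sign (colf n L j)"
definition act :: "nat \<Rightarrow> (nat \<Rightarrow> nat) \<Rightarrow> (nat \<Rightarrow> nat) \<Rightarrow> (nat \<Rightarrow> nat) \<Rightarrow> (nat \<Rightarrow> nat \<Rightarrow> nat) \<Rightarrow> (nat \<Rightarrow> nat \<Rightarrow> nat)" where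
  "act n p q l L = (\<lambda>i j. if i < n \<and> j < n then l (L (p i) (q j)) else 0)"

lemma rowf_permutes:
  assumes "latin_square n L" "i < n" shows "rowf n L i permutes {..<n}"
proof (rule bij_imp_permutes)
  have "bij_betw (\<lambda>j. L i j) {..<n} {..<n}" using assms by (simp add: latin_square_def)
  then show "bij_betw (rowf n L i) {..<n} {..<n}"
    by (rule bij_betw_cong[THEN iffD1, rotated]) (simp add: rowf_def)
qed (simp add: rowf_def)

lemma colf_permutes:
  assumes "latin_square n L" "j < n" shows "colf n L j permutes {..<n}"
proof (rule bij_imp_permutes)
  have "bij_betw (\<lambda>i. L i j) {..<n} {..<n}" using assms by (simp add: latin_square_def)
  then show "bij_betw (colf n L j) {..<n} {..<n}"
    by (rule bij_betw_cong[THEN iffD1, rotated]) (simp add: colf_def)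
qed (simp add: colf_def)

lemma perm_fin: "p permutes {..<(n::nat)} \<Longrightarrow> permutation p"
  using permutation_permutes by blast

lemma row_perm_eq:
  assumes "latin_square n L" "i < n" shows "row_perm n L i = inv (rowf n L i)"
proof
  fix s
  have P: "rowf n L i permutes {..<n}" using rowf_permutes[OF assms] .
  show "row_perm n L i s = inv (rowf n L i) s"
  proof (cases "s < n")
    case True
    have b: "bij_betw (\<lambda>j. L i j) {..<n} {..<n}" using assms by (simp add: latin_square_def)
    then obtain j where j: "j < n" "L i j = s" using True by (metis bij_betw_iff_bijections lessThan_iff)
    have "(THE j. j < n \<and> L i j = s) = j"
    proof (rule the_equality)
      show "j < n \<and> L i j = s" using j by simp
      fix j' assume "j' < n \<and> L i j' = s"
      then show "j' = j" using j b by (metis bij_betw_iff_bijections lessThan_iff)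
    qed
    moreover have "rowf n L i j = s" using j by (simp add: rowf_def)
    ultimately show ?thesis using True by (simp add: row_perm_def) (metis permutes_inverses(2)[OF P])
  next
    case False
    then show ?thesis using False permutes_inverses(2)[OF P, of s] by (simp add: row_perm_def rowf_def)
  qed
qed

lemma col_perm_eq:
  assumes "latin_square n L" "j < n" shows "col_perm n L j = inv (colf n L j)"
proof
  fix s
  have P: "colf n L j permutes {..<n}" using colf_permutes[OF assms] .
  show "col_perm n L j s = inv (colf n L j) s"
  proof (cases "s < n")
    case True
    have b: "bij_betw (\<lambda>i. L i j) {..<n} {..<n}" using assms by (simp add: latin_square_def)
    then obtain i where i: "i < n" "L i j = s" using True by (metis bij_betw_iff_bijections lessThan_iff)
    have "(THE i. i < n \<and> L i j = s) = i"
    proof (rule the_equality)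
      show "i < n \<and> L i j = s" using i by simp
      fix i' assume "i' < n \<and> L i' j = s"
      then show "i' = i" using i b by (metis bij_betw_iff_bijections lessThan_iff)
    qed
    moreover have "colf n L j i = s" using i by (simp add: colf_def)
    ultimately show ?thesis using True by (simp add: col_perm_def) (metis permutes_inverses(2)[OF P])
  next
    case False
    then show ?thesis using False permutes_inverses(2)[OF P, of s] by (simp add: col_perm_def colf_def)
  qed
qed

lemma sign_row_perm: "latin_square n L \<Longrightarrow> i < n \<Longrightarrow> sign (row_perm n L i) = rs n L i"
  by (simp add: row_perm_eq rs_def sign_inverse[OF perm_fin[OF rowf_permutes]])
lemma sign_col_perm: "latin_square n L \<Longrightarrow> j < n \<Longrightarrow> sign (col_perm n L j) = cs n L j"
  by (simp add: col_perm_eq cs_def sign_inverse[OF perm_fin[OF colf_permutes]])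

lemma act_latin:
  assumes L: "latin_square n L" and p: "p permutes {..<n}" and q: "q permutes {..<n}"
    and l: "l permutes {..<n}"
  shows "latin_square n (act n p q l L)"
  unfolding latin_square_def
proof (intro conjI allI impI)
  fix i j assume "n \<le> i \<or> n \<le> j" then show "act n p q l L i j = 0" by (auto simp: act_def)
next
  fix i assume i: "i < n"
  have pi: "p i < n" using i permutes_in_image[OF p, of i] by simp
  have b: "bij_betw (\<lambda>j. L (p i) j) {..<n} {..<n}" using L pi by (simp add: latin_square_def)
  have "bij_betw (l \<circ> (\<lambda>j. L (p i) j) \<circ> q) {..<n} {..<n}"
    by (intro bij_betw_trans[OF permutes_imp_bij[OF q]] bij_betw_trans[OF b] permutes_imp_bij[OF l])
  then show "bij_betw (\<lambda>j. act n p q l L i j) {..<n} {..<n}"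
    by (rule bij_betw_cong[THEN iffD1, rotated]) (simp add: act_def i)
next
  fix j assume j: "j < n"
  have qj: "q j < n" using j permutes_in_image[OF q, of j] by simp
  have b: "bij_betw (\<lambda>i. L i (q j)) {..<n} {..<n}" using L qj by (simp add: latin_square_def)
  have "bij_betw (l \<circ> (\<lambda>i. L i (q j)) \<circ> p) {..<n} {..<n}"
    by (intro bij_betw_trans[OF permutes_imp_bij[OF p]] bij_betw_trans[OF b] permutes_imp_bij[OF l])
  then show "bij_betw (\<lambda>i. act n p q l L i j) {..<n} {..<n}"
    by (rule bij_betw_cong[THEN iffD1, rotated]) (simp add: act_def j)
qed




lemma pin: "p permutes {..<(n::nat)} \<Longrightarrow> i < n \<Longrightarrow> p i < n"
  using permutes_in_image[of p "{..<n}" i] by simp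
lemma pout: "p permutes {..<(n::nat)} \<Longrightarrow> \<not> i < n \<Longrightarrow> p i = i"
  using permutes_not_in[of p "{..<n}" i] by simp

lemma rowf_act:
  assumes p: "p permutes {..<n}" and q: "q permutes {..<n}" and l: "l permutes {..<n}" and i: "i < n"
  shows "rowf n (act n p q l L) i = l \<circ> rowf n L (p i) \<circ> q"
proof
  fix j show "rowf n (act n p q l L) i j = (l \<circ> rowf n L (p i) \<circ> q) j"
    using i pin[OF q, of j] pout[OF q, of j] pout[OF l, of j]
    by (cases "j < n") (auto simp: rowf_def act_def)
qed

lemma colf_act:
  assumes p: "p permutes {..<n}" and q: "q permutes {..<n}" and l: "l permutes {..<n}" and j: "j < n"
  shows "colf n (act n p q l L) j = l \<circ> colf n L (q j) \<circ> p"
proof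
  fix i show "colf n (act n p q l L) j i = (l \<circ> colf n L (q j) \<circ> p) i"
    using j pin[OF p, of i] pout[OF p, of i] pout[OF l, of i]
    by (cases "i < n") (auto simp: colf_def act_def)
qed

lemma rs_act:
  assumes L: "latin_square n L" and p: "p permutes {..<n}" and q: "q permutes {..<n}" and l: "l permutes {..<n}" and i: "i < n"
  shows "rs n (act n p q l L) i = sign l * rs n L (p i) * sign q"
  unfolding rs_def rowf_act[OF p q l i]
  using perm_fin[OF l] perm_fin[OF q] perm_fin[OF rowf_permutes[OF L pin[OF p i]]]
  by (simp add: sign_compose permutation_compose)

lemma cs_act:
  assumes L: "latin_square n L" and p: "p permutes {..<n}" and q: "q permutes {..<n}" and l: "l permutes {..<n}" and j: "j < n"
  shows "cs n (act n p q l L) j = sign l * cs n L (q j) * sign p"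
  unfolding cs_def colf_act[OF p q l j]
  using perm_fin[OF l] perm_fin[OF p] perm_fin[OF colf_permutes[OF L pin[OF q j]]]
  by (simp add: sign_compose permutation_compose)

lemma act_comp:
  assumes p: "p permutes {..<n}" and q: "q permutes {..<n}"
  shows "act n p q l (act n p' q' l' L) = act n (p' \<circ> p) (q' \<circ> q) (l \<circ> l') L"
  by (auto simp: act_def fun_eq_iff pin[OF p] pin[OF q])

lemma act_id: "latin_square n L \<Longrightarrow> act n id id id L = L"
  by (auto simp: act_def fun_eq_iff latin_square_def)

lemma act_inv:
  assumes L: "latin_square n L" and p: "p permutes {..<n}" and q: "q permutes {..<n}" and l: "l permutes {..<n}"
  shows "act n (inv p) (inv q) (inv l) (act n p q l L) = L"
  using act_comp[OF permutes_inv[OF p] permutes_inv[OF q]] act_id[OF L]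
  by (simp add: permutes_inv_o[OF p] permutes_inv_o[OF q] permutes_inv_o[OF l])

lemma card_perm_pred:
  assumes p: "p permutes {..<(n::nat)}"
  shows "card {i. i < n \<and> P (p i)} = card {i. i < n \<and> P i}"
proof (rule bij_betw_same_card)
  show "bij_betw p {i. i < n \<and> P (p i)} {i. i < n \<and> P i}"
    unfolding bij_betw_def
  proof
    show "inj_on p {i. i < n \<and> P (p i)}" using permutes_inj_on[OF p] .
    show "p ` {i. i < n \<and> P (p i)} = {i. i < n \<and> P i}"
    proof (intro set_eqI iffI)
      fix x assume "x \<in> p ` {i. i < n \<and> P (p i)}" then show "x \<in> {i. i < n \<and> P i}" using pin[OF p] by auto
    next
      fix x assume x: "x \<in> {i. i < n \<and> P i}"
      have "inv p x < n" using pin[OF permutes_inv[OF p]] x by simp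
      moreover have "p (inv p x) = x" using permutes_inverses(1)[OF p] .
      ultimately show "x \<in> p ` {i. i < n \<and> P (p i)}" using x by (metis (mono_tags, lifting) image_eqI mem_Collect_eq)
    qed
  qed
qed

lemma card_compl_pred: "card {i. i < (n::nat) \<and> \<not> P i} = n - card {i. i < n \<and> P i}"
proof -
  have "{i. i < n \<and> \<not> P i} = {..<n} - {i. i < n \<and> P i}" by auto
  moreover have "card ({..<n} - {i. i < n \<and> P i}) = card {..<n} - card {i. i < n \<and> P i}"
    by (rule card_Diff_subset) auto
  ultimately show ?thesis by simp
qed

definition er :: "nat \<Rightarrow> (nat \<Rightarrow> nat \<Rightarrow> nat) \<Rightarrow> nat" where
  "er n L = card {i. i < n \<and> rs n L i = 1}"
definition ec :: "nat \<Rightarrow> (nat \<Rightarrow> nat \<Rightarrow> nat) \<Rightarrow> nat" where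
  "ec n L = card {j. j < n \<and> cs n L j = 1}"

lemma sign_pm: "sign p = 1 \<or> sign p = (-1::int)"
  by (cases p rule: sign_cases) auto

lemma er_act:
  assumes L: "latin_square n L" and p: "p permutes {..<n}" and q: "q permutes {..<n}" and l: "l permutes {..<n}"
  shows "er n (act n p q l L) = (if sign l * sign q = 1 then er n L else n - er n L)"
proof -
  have "{i. i < n \<and> rs n (act n p q l L) i = 1} = {i. i < n \<and> sign l * sign q * rs n L (p i) = 1}"
    using rs_act[OF L p q l] by (auto simp: algebra_simps)
  also have "card \<dots> = card {i. i < n \<and> sign l * sign q * rs n L i = 1}"
    by (rule card_perm_pred[OF p])
  finally have e: "er n (act n p q l L) = card {i. i < n \<and> sign l * sign q * rs n L i = 1}"
    by (simp add: er_def)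
  show ?thesis
  proof (cases "sign l * sign q = 1")
    case True then show ?thesis using e by (simp add: er_def)
  next
    case False
    then have m: "sign l * sign q = -1" using sign_pm[of l] sign_pm[of q] by auto
    have "{i. i < n \<and> sign l * sign q * rs n L i = 1} = {i. i < n \<and> \<not> rs n L i = 1}"
      using m sign_pm unfolding rs_def by auto
    then show ?thesis using e False card_compl_pred by (simp add: er_def)
  qed
qed

lemma ec_act:
  assumes L: "latin_square n L" and p: "p permutes {..<n}" and q: "q permutes {..<n}" and l: "l permutes {..<n}"
  shows "ec n (act n p q l L) = (if sign l * sign p = 1 then ec n L else n - ec n L)"
proof -
  have "{i. i < n \<and> cs n (act n p q l L) i = 1} = {i. i < n \<and> sign l * sign p * cs n L (q i) = 1}"
    using cs_act[OF L p q l] by (auto simp: algebra_simps)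
  also have "card \<dots> = card {i. i < n \<and> sign l * sign p * cs n L i = 1}"
    by (rule card_perm_pred[OF q])
  finally have e: "ec n (act n p q l L) = card {i. i < n \<and> sign l * sign p * cs n L i = 1}"
    by (simp add: ec_def)
  show ?thesis
  proof (cases "sign l * sign p = 1")
    case True then show ?thesis using e by (simp add: ec_def)
  next
    case False
    then have m: "sign l * sign p = -1" using sign_pm[of l] sign_pm[of p] by auto
    have "{i. i < n \<and> sign l * sign p * cs n L i = 1} = {i. i < n \<and> \<not> cs n L i = 1}"
      using m sign_pm unfolding cs_def by auto
    then show ?thesis using e False card_compl_pred by (simp add: ec_def)
  qed
qed




lemma finite_latin: "finite {L. latin_square n L}"
proof -
  let ?f = "\<lambda>L. (\<lambda>i\<in>{..<n}. \<lambda>j\<in>{..<n}. L i j)"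
  let ?B = "PiE {..<n} (\<lambda>_. PiE {..<n} (\<lambda>_. {..<n}))"
  have "inj_on ?f {L. latin_square n L}"
  proof (rule inj_onI)
    fix L L' assume L: "L \<in> {L. latin_square n L}" and L': "L' \<in> {L. latin_square n L}" and e: "?f L = ?f L'"
    show "L = L'"
    proof (intro ext)
      fix i j show "L i j = L' i j"
      proof (cases "i < n \<and> j < n")
        case True then show ?thesis using fun_cong[OF fun_cong[OF e, of i], of j] by simp
      next
        case False then show ?thesis using L L' by (auto simp: latin_square_def)
      qed
    qed
  qed
  moreover have "?f ` {L. latin_square n L} \<subseteq> ?B"
  proof
    fix x assume "x \<in> ?f ` {L. latin_square n L}"
    then obtain L where L: "latin_square n L" and x: "x = ?f L" by auto
    have "\<And>i j. i < n \<Longrightarrow> j < n \<Longrightarrow> L i j < n"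
      using L unfolding latin_square_def by (meson bij_betwE lessThan_iff)
    then show "x \<in> ?B" using x by auto
  qed
  moreover have "finite ?B" by (intro finite_PiE) auto
  ultimately show ?thesis using inj_on_finite by blast
qed




lemma reduced_rowf0: "reduced_latin_square n R \<Longrightarrow> rowf n R 0 = id"
  by (auto simp: reduced_latin_square_def rowf_def fun_eq_iff)
lemma reduced_colf0: "reduced_latin_square n R \<Longrightarrow> colf n R 0 = id"
  by (auto simp: reduced_latin_square_def colf_def fun_eq_iff)
lemma reduced_rs0: "reduced_latin_square n R \<Longrightarrow> rs n R 0 = 1"
  by (simp add: rs_def reduced_rowf0)
lemma reduced_cs0: "reduced_latin_square n R \<Longrightarrow> cs n R 0 = 1"
  by (simp add: cs_def reduced_colf0)

definition BB where "BB n r c = {L. reduced_latin_square n L \<and> er n L = r \<and> ec n L = c}"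
definition Ev0 where "Ev0 n = {p. p permutes {..<n} \<and> p 0 = (0::nat) \<and> sign p = 1}"
definition Ev where "Ev n = {p. p permutes {..<(n::nat)} \<and> sign p = 1}"
definition X00 where "X00 n r c = {L. latin_square n L \<and> er n L = r \<and> ec n L = c \<and> rs n L 0 = 1 \<and> cs n L 0 = 1}"

lemma act_reduced_facts:
  assumes R: "reduced_latin_square n R" and p: "p permutes {..<n}" and l: "l permutes {..<n}" and n: "0 < n"
    and p0: "p 0 = 0"
  shows "rowf n (act n p id l R) 0 = l" "colf n (act n p id l R) 0 = l \<circ> p"
proof -
  have L: "latin_square n R" using R by (simp add: reduced_latin_square_def)
  show "rowf n (act n p id l R) 0 = l"
    using rowf_act[OF p permutes_id l n] reduced_rowf0[OF R] p0 by simp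
  show "colf n (act n p id l R) 0 = l \<circ> p"
    using colf_act[OF p permutes_id l n] reduced_colf0[OF R] by simp
qed




lemma claim1:
  assumes n: "0 < n"
  shows "card (X00 n r c) = card (BB n r c) * (card (Ev0 n) * card (Ev n))"
proof -
  let ?g = "\<lambda>(R, p, l). act n p id l R"
  let ?D = "BB n r c \<times> (Ev0 n \<times> Ev n)"
  have inj: "inj_on ?g ?D"
  proof (rule inj_onI)
    fix x y assume A1: "x \<in> ?D" and A2: "y \<in> ?D" and e0: "?g x = ?g y"
    obtain R p l where x: "x = (R, p, l)" by (cases x) auto
    obtain R' p' l' where y: "y = (R', p', l')" by (cases y) auto
    have A: "(R, p, l) \<in> ?D" "(R', p', l') \<in> ?D" using A1 A2 x y by auto
    have e: "act n p id l R = act n p' id l' R'" using e0 x y by simp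
    have R: "reduced_latin_square n R" "p permutes {..<n}" "p 0 = 0" "l permutes {..<n}"
      using A(1) by (auto simp: BB_def Ev0_def Ev_def)
    have R': "reduced_latin_square n R'" "p' permutes {..<n}" "p' 0 = 0" "l' permutes {..<n}"
      using A(2) by (auto simp: BB_def Ev0_def Ev_def)
    have ll: "l = l'" using act_reduced_facts(1)[OF R(1,2,4) n R(3)] act_reduced_facts(1)[OF R'(1,2,4) n R'(3)] e by simp
    have "l \<circ> p = l' \<circ> p'" using act_reduced_facts(2)[OF R(1,2,4) n R(3)] act_reduced_facts(2)[OF R'(1,2,4) n R'(3)] e by simp
    then have "\<And>x. l (p x) = l (p' x)" using ll by (metis comp_apply)
    then have pp: "p = p'" using permutes_inj[OF R(4)] by (simp add: inj_eq fun_eq_iff)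
    have LR: "latin_square n R" "latin_square n R'" using R(1) R'(1) by (auto simp: reduced_latin_square_def)
    have "R = act n (inv p) (inv id) (inv l) (act n p id l R)" using act_inv[OF LR(1) R(2) permutes_id R(4)] by simp
    also have "\<dots> = R'" using act_inv[OF LR(2) R'(2) permutes_id R'(4)] e ll pp by simp
    finally show "x = y" using ll pp x y by simp
  qed
  have img: "?g ` ?D = X00 n r c"
  proof (intro set_eqI iffI)
    fix L assume "L \<in> ?g ` ?D"
    then obtain R p l where A: "(R, p, l) \<in> ?D" and L: "L = act n p id l R" by auto
    have R: "reduced_latin_square n R" "p permutes {..<n}" "p 0 = 0" "l permutes {..<n}" "er n R = r" "ec n R = c"
      "sign p = 1" "sign l = 1"
      using A by (auto simp: BB_def Ev0_def Ev_def)
    have LR: "latin_square n R" using R by (simp add: reduced_latin_square_def)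
    show "L \<in> X00 n r c"
      unfolding X00_def L
      using act_latin[OF LR R(2) permutes_id R(4)] er_act[OF LR R(2) permutes_id R(4)]
        ec_act[OF LR R(2) permutes_id R(4)] R(3,5-8) n
        rs_act[OF LR R(2) permutes_id R(4) n] cs_act[OF LR R(2) permutes_id R(4) n]
        reduced_rs0[OF R(1)] reduced_cs0[OF R(1)]
      by simp
  next
    fix L assume "L \<in> X00 n r c"
    then have L: "latin_square n L" "er n L = r" "ec n L = c" "rs n L 0 = 1" "cs n L 0 = 1"
      by (auto simp: X00_def)
    define l where "l = rowf n L 0"
    define p where "p = inv l \<circ> colf n L 0"
    have l: "l permutes {..<n}" using rowf_permutes[OF L(1) n] by (simp add: l_def)
    have p: "p permutes {..<n}" unfolding p_def
      by (intro permutes_compose colf_permutes[OF L(1) n] permutes_inv[OF l])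
    have sl: "sign l = 1" using L(4) by (simp add: rs_def l_def)
    have sp: "sign p = 1" unfolding p_def
      using sign_compose[OF perm_fin[OF permutes_inv[OF l]] perm_fin[OF colf_permutes[OF L(1) n]]]
        sign_inverse[OF perm_fin[OF l]] sl L(5) by (simp add: cs_def)
    have p0: "p 0 = 0" unfolding p_def using n permutes_inverses(2)[OF l, of 0]
      by (simp add: colf_def l_def rowf_def)
    define R where "R = act n (inv p) id (inv l) L"
    have pi: "inv p permutes {..<n}" "inv l permutes {..<n}" using p l by (simp_all add: permutes_inv)
    have RL: "latin_square n R" unfolding R_def by (rule act_latin[OF L(1) pi(1) permutes_id pi(2)])
    have ip0: "inv p 0 = 0" using p0 permutes_inverses(2)[OF p, of 0] by simp
    have red: "reduced_latin_square n R"
      unfolding reduced_latin_square_def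
    proof (intro conjI allI impI RL)
      fix j assume j: "j < n"
      show "R 0 j = j" unfolding R_def act_def using j n ip0 permutes_inverses(2)[OF l, of j]
        by (simp add: l_def rowf_def)
    next
      fix i assume i: "i < n"
      have "p (inv p i) = i" using permutes_inverses(1)[OF p] .
      moreover have "inv p i < n" using pin[OF pi(1) i] .
      ultimately show "R i 0 = i" unfolding R_def act_def using i n
        by (simp add: p_def colf_def)
    qed
    have erR: "er n R = r" unfolding R_def using er_act[OF L(1) pi(1) permutes_id pi(2)] L(2)
      sign_inverse[OF perm_fin[OF l]] sl by simp
    have ecR: "ec n R = c" unfolding R_def using ec_act[OF L(1) pi(1) permutes_id pi(2)] L(3)
      sign_inverse[OF perm_fin[OF l]] sl sign_inverse[OF perm_fin[OF p]] sp by simp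
    have "act n p id l R = L"
      unfolding R_def using act_comp[OF p permutes_id] act_id[OF L(1)]
      by (simp add: permutes_inv_o[OF p] permutes_inv_o[OF l])
    moreover have "(R, p, l) \<in> ?D" using red erR ecR p p0 sp l sl by (auto simp: BB_def Ev0_def Ev_def)
    ultimately show "L \<in> ?g ` ?D" by (intro image_eqI[where x="(R, p, l)"]) simp_all
  qed
  have "card (X00 n r c) = card ?D" using card_image[OF inj] img by simp
  then show ?thesis by (simp add: card_cartesian_product)
qed




definition Xab where "Xab n a b r c = {L. latin_square n L \<and> er n L = r \<and> ec n L = c \<and> rs n L a = 1 \<and> cs n L b = 1}"
definition Y where "Y n r c = {L. latin_square n L \<and> er n L = r \<and> ec n L = c}"

lemma even_perm_to:
  assumes n: "3 \<le> (n::nat)" and a: "a < n"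
  shows "\<exists>p. p permutes {..<n} \<and> sign p = 1 \<and> p 0 = a"
proof (cases "a = 0")
  case True then show ?thesis by (intro exI[of _ id]) simp
next
  case False
  obtain d where d: "d < n" "d \<noteq> 0" "d \<noteq> a"
  proof (cases "a = 1")
    case True then show ?thesis using that[of "2::nat"] n by auto
  next
    case False then show ?thesis using that[of "1::nat"] n \<open>a \<noteq> 0\<close> by auto
  qed
  let ?p = "transpose 0 a \<circ> transpose a d"
  have "?p permutes {..<n}" using a d n by (intro permutes_compose permutes_swap_id) auto
  moreover have "sign ?p = 1"
    using sign_compose[of "transpose 0 a" "transpose a d"] \<open>a \<noteq> 0\<close> d
    by (simp add: sign_swap_id permutation_swap_id)
  moreover have "?p 0 = a" using \<open>a \<noteq> 0\<close> d by simp
  ultimately show ?thesis by blast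
qed

lemma act_inj: "p permutes {..<n} \<Longrightarrow> q permutes {..<n} \<Longrightarrow> l permutes {..<n} \<Longrightarrow>
  inj_on (act n p q l) {L. latin_square n L}"
  by (rule inj_on_inverseI[where g = "act n (inv p) (inv q) (inv l)"]) (simp add: act_inv)

lemma move:
  assumes p: "p permutes {..<n}" and q: "q permutes {..<n}" and sp: "sign p = 1" and sq: "sign q = 1"
    and a': "a' < n" and b': "b' < n" and L: "L \<in> Xab n (p a') (q b') r c"
  shows "act n p q id L \<in> Xab n a' b' r c"
proof -
  have L: "latin_square n L" "er n L = r" "ec n L = c" "rs n L (p a') = 1" "cs n L (q b') = 1"
    using L by (auto simp: Xab_def)
  show ?thesis unfolding Xab_def
    using act_latin[OF L(1) p q permutes_id] er_act[OF L(1) p q permutes_id] ec_act[OF L(1) p q permutes_id]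
      rs_act[OF L(1) p q permutes_id a'] cs_act[OF L(1) p q permutes_id b'] L sp sq by simp
qed

lemma Xab_sub: "Xab n a b r c \<subseteq> {L. latin_square n L}" by (auto simp: Xab_def)

lemma card_Xab:
  assumes n: "3 \<le> n" and a: "a < n" and b: "b < n"
  shows "card (Xab n a b r c) = card (Xab n 0 0 r c)"
proof -
  obtain p where p: "p permutes {..<n}" "sign p = 1" "p 0 = a" using even_perm_to[OF n a] by blast
  obtain q where q: "q permutes {..<n}" "sign q = 1" "q 0 = b" using even_perm_to[OF n b] by blast
  have n0: "0 < n" using n by simp
  have pi: "inv p permutes {..<n}" "sign (inv p) = 1" "inv p a = 0"
    using p permutes_inv[OF p(1)] sign_inverse[OF perm_fin[OF p(1)]] permutes_inverses(2)[OF p(1), of 0] by auto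
  have qi: "inv q permutes {..<n}" "sign (inv q) = 1" "inv q b = 0"
    using q permutes_inv[OF q(1)] sign_inverse[OF perm_fin[OF q(1)]] permutes_inverses(2)[OF q(1), of 0] by auto
  have fin: "finite (Xab n a b r c)" "finite (Xab n 0 0 r c)"
    using finite_subset[OF Xab_sub finite_latin] by auto
  have "card (Xab n a b r c) \<le> card (Xab n 0 0 r c)"
  proof (rule card_inj_on_le[OF _ _ fin(2)])
    show "inj_on (act n p q id) (Xab n a b r c)"
      using inj_on_subset[OF act_inj[OF p(1) q(1) permutes_id] Xab_sub] .
    show "act n p q id ` Xab n a b r c \<subseteq> Xab n 0 0 r c"
      using move[OF p(1) q(1) p(2) q(2) n0 n0] p(3) q(3) by auto
  qed
  moreover have "card (Xab n 0 0 r c) \<le> card (Xab n a b r c)"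
  proof (rule card_inj_on_le[OF _ _ fin(1)])
    show "inj_on (act n (inv p) (inv q) id) (Xab n 0 0 r c)"
      using inj_on_subset[OF act_inj[OF pi(1) qi(1) permutes_id] Xab_sub] .
    show "act n (inv p) (inv q) id ` Xab n 0 0 r c \<subseteq> Xab n a b r c"
      using move[OF pi(1) qi(1) pi(2) qi(2) a b] pi(3) qi(3) by auto
  qed
  ultimately show ?thesis by simp
qed

lemma er_le: "er n L \<le> n"
proof -
  have "er n L \<le> card {..<n}" unfolding er_def by (rule card_mono) auto
  then show ?thesis by simp
qed
lemma ec_le: "ec n L \<le> n"
proof -
  have "ec n L \<le> card {..<n}" unfolding ec_def by (rule card_mono) auto
  then show ?thesis by simp
qed

lemma card_ind: "finite A \<Longrightarrow> card {x\<in>A. P x} = (\<Sum>x\<in>A. if P x then 1 else 0)"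
  by (simp add: sum.inter_filter[symmetric])

lemma claim2:
  assumes n: "3 \<le> n"
  shows "n * n * card (Xab n 0 0 r c) = card (Y n r c) * r * c"
proof -
  have finY: "finite (Y n r c)" using finite_subset[OF _ finite_latin, of "Y n r c"] by (auto simp: Y_def)
  have XY: "Xab n a b r c = {L \<in> Y n r c. rs n L a = 1 \<and> cs n L b = 1}" for a b
    by (auto simp: Xab_def Y_def)
  have "(\<Sum>a<n. \<Sum>b<n. card (Xab n a b r c)) = (\<Sum>a<n. \<Sum>b<n. card (Xab n 0 0 r c))"
    by (intro sum.cong refl card_Xab[OF n]) auto
  also have "\<dots> = n * n * card (Xab n 0 0 r c)" by simp
  finally have 1: "(\<Sum>a<n. \<Sum>b<n. card (Xab n a b r c)) = n * n * card (Xab n 0 0 r c)" .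
  have "(\<Sum>a<n. \<Sum>b<n. card (Xab n a b r c)) =
        (\<Sum>a<n. \<Sum>b<n. \<Sum>L\<in>Y n r c. (if rs n L a = 1 then 1 else 0) * (if cs n L b = 1 then 1 else 0))"
    unfolding XY card_ind[OF finY] by (intro sum.cong refl) auto
  also have "\<dots> = (\<Sum>a<n. \<Sum>L\<in>Y n r c. \<Sum>b<n. (if rs n L a = 1 then 1 else 0) * (if cs n L b = 1 then 1 else 0))"
    by (intro sum.cong refl) (rule sum.swap)
  also have "\<dots> = (\<Sum>L\<in>Y n r c. \<Sum>a<n. \<Sum>b<n. (if rs n L a = 1 then 1 else 0) * (if cs n L b = 1 then 1 else 0))"
    by (rule sum.swap)
  also have "\<dots> = (\<Sum>L\<in>Y n r c. (\<Sum>a<n. if rs n L a = 1 then 1 else 0) * (\<Sum>b<n. if cs n L b = 1 then 1 else 0))"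
    by (simp add: sum_product)
  also have "\<dots> = (\<Sum>L\<in>Y n r c. er n L * ec n L)"
  proof (intro sum.cong refl)
    fix L
    have "er n L = (\<Sum>a<n. if rs n L a = 1 then 1 else 0)"
      unfolding er_def using card_ind[of "{..<n}" "\<lambda>a. rs n L a = 1"] by (simp add: lessThan_def)
    moreover have "ec n L = (\<Sum>a<n. if cs n L a = 1 then 1 else 0)"
      unfolding ec_def using card_ind[of "{..<n}" "\<lambda>a. cs n L a = 1"] by (simp add: lessThan_def)
    ultimately show "(\<Sum>a<n. if rs n L a = 1 then 1 else 0) * (\<Sum>b<n. if cs n L b = 1 then 1 else 0) = er n L * ec n L"
      by simp
  qed
  also have "\<dots> = (\<Sum>L\<in>Y n r c. r * c)" by (intro sum.cong refl) (auto simp: Y_def)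
  also have "\<dots> = card (Y n r c) * r * c" by simp
  finally show ?thesis using 1 by simp
qed

lemma Y_flip_row:
  assumes n: "2 \<le> n"
  shows "card (Y n r c) \<le> card (Y n (n - r) c)"
proof -
  let ?t = "transpose (0::nat) 1"
  have t: "?t permutes {..<n}" using n by (intro permutes_swap_id) auto
  have st: "sign ?t = -1" by (simp add: sign_swap_id)
  have fin: "finite (Y n (n - r) c)" using finite_subset[OF _ finite_latin, of "Y n (n-r) c"] by (auto simp: Y_def)
  show ?thesis
  proof (rule card_inj_on_le[OF _ _ fin])
    show "inj_on (act n id ?t id) (Y n r c)"
      by (rule inj_on_subset[OF act_inj[OF permutes_id t permutes_id]]) (auto simp: Y_def)
    show "act n id ?t id ` Y n r c \<subseteq> Y n (n - r) c"
    proof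
      fix L' assume "L' \<in> act n id ?t id ` Y n r c"
      then obtain L where L: "latin_square n L" "er n L = r" "ec n L = c" and e: "L' = act n id ?t id L"
        by (auto simp: Y_def)
      show "L' \<in> Y n (n - r) c" unfolding e Y_def
        using act_latin[OF L(1) permutes_id t permutes_id] er_act[OF L(1) permutes_id t permutes_id]
          ec_act[OF L(1) permutes_id t permutes_id] st L by simp
    qed
  qed
qed

lemma Y_flip_col:
  assumes n: "2 \<le> n"
  shows "card (Y n r c) \<le> card (Y n r (n - c))"
proof -
  let ?t = "transpose (0::nat) 1"
  have t: "?t permutes {..<n}" using n by (intro permutes_swap_id) auto
  have st: "sign ?t = -1" by (simp add: sign_swap_id)
  have fin: "finite (Y n r (n - c))" using finite_subset[OF _ finite_latin, of "Y n r (n-c)"] by (auto simp: Y_def)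
  show ?thesis
  proof (rule card_inj_on_le[OF _ _ fin])
    show "inj_on (act n ?t id id) (Y n r c)"
      by (rule inj_on_subset[OF act_inj[OF t permutes_id permutes_id]]) (auto simp: Y_def)
    show "act n ?t id id ` Y n r c \<subseteq> Y n r (n - c)"
    proof
      fix L' assume "L' \<in> act n ?t id id ` Y n r c"
      then obtain L where L: "latin_square n L" "er n L = r" "ec n L = c" and e: "L' = act n ?t id id L"
        by (auto simp: Y_def)
      show "L' \<in> Y n r (n - c)" unfolding e Y_def
        using act_latin[OF L(1) t permutes_id permutes_id] er_act[OF L(1) t permutes_id permutes_id]
          ec_act[OF L(1) t permutes_id permutes_id] st L by simp
    qed
  qed
qed

lemma Y_row_eq: "2 \<le> n \<Longrightarrow> r \<le> n \<Longrightarrow> card (Y n r c) = card (Y n (n - r) c)"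
  using Y_flip_row[of n r c] Y_flip_row[of n "n - r" c] by simp
lemma Y_col_eq: "2 \<le> n \<Longrightarrow> c \<le> n \<Longrightarrow> card (Y n r c) = card (Y n r (n - c))"
  using Y_flip_col[of n r c] Y_flip_col[of n r "n - c"] by simp




lemma prod_pm:
  assumes "\<forall>i<n. f i = 1 \<or> f i = (-1::int)"
  shows "(\<Prod>i<(n::nat). f i) = (-1) ^ card {i. i < n \<and> f i \<noteq> 1}"
  using assms
proof (induction n)
  case 0 then show ?case by simp
next
  case (Suc n)
  have IH: "(\<Prod>i<n. f i) = (-1) ^ card {i. i < n \<and> f i \<noteq> 1}" using Suc by simp
  show ?case
  proof (cases "f n = 1")
    case True
    have "{i. i < Suc n \<and> f i \<noteq> 1} = {i. i < n \<and> f i \<noteq> 1}" using True less_Suc_eq by auto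
    then show ?thesis using IH True by simp
  next
    case False
    then have fn: "f n = -1" using Suc.prems by auto
    have e: "{i. i < Suc n \<and> f i \<noteq> 1} = insert n {i. i < n \<and> f i \<noteq> 1}" using False less_Suc_eq by auto
    have "card {i. i < Suc n \<and> f i \<noteq> 1} = Suc (card {i. i < n \<and> f i \<noteq> 1})"
      unfolding e by (subst card_insert_disjoint) auto
    then show ?thesis using IH fn by simp
  qed
qed

lemma prod_rs: "(\<Prod>i<n. rs n L i) = (-1) ^ (n - er n L)"
proof -
  have "(\<Prod>i<n. rs n L i) = (-1) ^ card {i. i < n \<and> \<not> rs n L i = 1}"
    by (rule prod_pm) (auto simp: rs_def sign_pm)
  then show ?thesis by (simp add: card_compl_pred er_def)
qed
lemma prod_cs: "(\<Prod>i<n. cs n L i) = (-1) ^ (n - ec n L)"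
proof -
  have "(\<Prod>i<n. cs n L i) = (-1) ^ card {i. i < n \<and> \<not> cs n L i = 1}"
    by (rule prod_pm) (auto simp: cs_def sign_pm)
  then show ?thesis by (simp add: card_compl_pred ec_def)
qed

lemma even_aux: assumes "(a::nat) \<le> n" "b \<le> n" shows "even (n - a + (n - b)) = even (a + b)"
proof -
  have "(n - a + (n - b)) + (a + b) = 2 * n" using assms by simp
  then have "even ((n - a + (n - b)) + (a + b))" by simp
  then show ?thesis by (simp only: even_add)
qed

lemma even_iff:
  assumes L: "latin_square n L"
  shows "even_latin_square n L \<longleftrightarrow> even (er n L + ec n L)"
proof -
  have "par n L = (\<Prod>i<n. rs n L i) * (\<Prod>i<n. cs n L i)"
    unfolding par_def using sign_row_perm[OF L] sign_col_perm[OF L] by simp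
  also have "\<dots> = (-1) ^ ((n - er n L) + (n - ec n L))" by (simp add: prod_rs prod_cs power_add)
  finally have "even_latin_square n L \<longleftrightarrow> even ((n - er n L) + (n - ec n L))"
    by (simp add: even_latin_square_def minus_one_power_iff)
  moreover have "even ((n - er n L) + (n - ec n L)) \<longleftrightarrow> even (er n L + ec n L)"
    by (rule even_aux[OF er_le ec_le])
  ultimately show ?thesis by simp
qed

lemma ptype_iff:
  assumes L: "latin_square n L"
  shows "parity_type n L k m \<longleftrightarrow> er n L \<in> {k, n - k} \<and> ec n L \<in> {m, n - m}"
proof -
  have "{i. i < n \<and> sign (row_perm n L i) = (1::int)} = {i. i < n \<and> rs n L i = 1}"
    using sign_row_perm[OF L] by auto
  moreover have "{i. i < n \<and> sign (col_perm n L i) = (1::int)} = {i. i < n \<and> cs n L i = 1}"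
    using sign_col_perm[OF L] by auto
  ultimately show ?thesis by (simp add: parity_type_def er_def ec_def)
qed




lemma K_pos: "0 < card (Ev0 n) * card (Ev n)"
proof -
  have f1: "finite (Ev0 n)" using finite_subset[OF _ finite_permutations[of "{..<n}"]] by (auto simp: Ev0_def)
  have f2: "finite (Ev n)" using finite_subset[OF _ finite_permutations[of "{..<n}"]] by (auto simp: Ev_def)
  have "id \<in> Ev0 n" "id \<in> Ev n" by (auto simp: Ev0_def Ev_def)
  then show ?thesis using f1 f2 by (auto simp: card_gt_0_iff)
qed

lemma key:
  assumes n: "3 \<le> n"
  shows "n * n * (card (Ev0 n) * card (Ev n)) * card (BB n r c) = card (Y n r c) * r * c"
proof -
  have "X00 n r c = Xab n 0 0 r c" by (simp add: X00_def Xab_def)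
  then show ?thesis using claim1[of n r c] claim2[OF n, of r c] n by (simp add: ac_simps)
qed

lemma finBB: "finite (BB n r c)"
  using finite_subset[OF _ finite_latin, of "BB n r c" n] by (auto simp: BB_def reduced_latin_square_def)

lemma par_aux:
  assumes "odd (n::nat)" "k \<le> n" "m \<le> n"
  shows "even (k + m) \<longleftrightarrow> even ((n - k) + (n - m))"
    and "even (k + m) \<longleftrightarrow> odd ((n - k) + m)"
    and "even (k + m) \<longleftrightarrow> odd (k + (n - m))"
  using assms by presburger+

lemma arith_aux:
  assumes "k \<le> (n::nat)" "m \<le> n"
  shows "k * m + (n - k) * m + k * (n - m) + (n - k) * (n - m) = n * n"
proof -
  obtain j where j: "n = k + j" using assms(1) le_Suc_ex by blast
  obtain i where i: "n = m + i" using assms(2) le_Suc_ex by blast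
  have "k * m + j * m + k * i + j * i = (k + j) * (m + i)" by (simp add: algebra_simps)
  moreover have "n - k = j" "n - m = i" using i j by simp_all
  ultimately show ?thesis using i j by simp
qed

lemma sel_odd:
  assumes "odd (n::nat)" "k \<le> n" "m \<le> n" "odd (k + m)" "r \<in> {k, n - k}" "c \<in> {m, n - m}"
  shows "even (r + c) \<longleftrightarrow> (r = n - k \<and> c = m) \<or> (r = k \<and> c = n - m)"
proof -
  have kk: "k \<noteq> n - k" "m \<noteq> n - m" using assms(1-3) by presburger+
  from assms(5,6) consider "r = k" "c = m" | "r = n - k" "c = m" | "r = k" "c = n - m" | "r = n - k" "c = n - m"
    by blast
  then show ?thesis
  proof cases
    case 1 then show ?thesis using assms kk by simp
  next
    case 2 then show ?thesis using assms kk by (simp; presburger)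
  next
    case 3 then show ?thesis using assms kk by (simp; presburger)
  next
    case 4 then show ?thesis using assms kk by (simp; presburger)
  qed
qed

theorem corollary3p2:
  fixes n k m :: nat
  assumes "odd n" and "2 * k \<le> n" and "2 * m \<le> n"
  defines "N \<equiv> card {L. reduced_latin_square n L \<and> parity_type n L k m}"
  defines "E \<equiv> card {L. reduced_latin_square n L \<and> parity_type n L k m \<and> even_latin_square n L}"
  shows "(even (k + m) \<longrightarrow>
            real E = (real (k * m + (n - k) * (n - m)) / real (n ^ 2)) * real N) \<and>
         (odd (k + m) \<longrightarrow>
            real E = (real (k * (n - m) + m * (n - k)) / real (n ^ 2)) * real N)"
proof (cases "n = 1")
  case True
  then have km: "k = 0" "m = 0" using assms(2,3) by auto
  have "{L. reduced_latin_square n L \<and> parity_type n L k m \<and> even_latin_square n L}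
      = {L. reduced_latin_square n L \<and> parity_type n L k m}"
  proof (intro Collect_cong iffI conjI)
    fix L assume A: "reduced_latin_square n L \<and> parity_type n L k m"
    have LL: "latin_square n L" using A by (simp add: reduced_latin_square_def)
    have "{i. i < n \<and> rs n L i = 1} = {0}" using True reduced_rs0[of n L] A by auto
    then have "er n L = 1" unfolding er_def by simp
    have "{i. i < n \<and> cs n L i = 1} = {0}" using True reduced_cs0[of n L] A by auto
    then have "ec n L = 1" unfolding ec_def by simp
    with \<open>er n L = 1\<close> show "even_latin_square n L" using even_iff[OF LL] by simp
  qed auto
  then have "E = N" by (simp add: E_def N_def)
  then show ?thesis using True km by simp
next
  case False
  then have n3: "3 \<le> n" using assms(1) by presburger
  have kn: "k \<le> n" "m \<le> n" using assms by auto
  have kk: "k \<noteq> n - k" "m \<noteq> n - m" using assms(1) kn by presburger+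
  define K where "K = card (Ev0 n) * card (Ev n)"
  have K: "0 < K" unfolding K_def by (rule K_pos)
  define b where "b = (\<lambda>r c. card (BB n r c))"
  define t where "t = card (Y n k m)"
  have t: "card (Y n (n - k) m) = t" "card (Y n k (n - m)) = t" "card (Y n (n - k) (n - m)) = t"
    using Y_row_eq[where n=n and r=k and c=m] Y_col_eq[where n=n and r=k and c=m] Y_col_eq[where n=n and r="n - k" and c=m] n3 kn by (simp_all add: t_def)
  have kb: "n * n * K * b r c = card (Y n r c) * r * c" for r c
    using key[OF n3] by (simp add: K_def b_def)
  have BBred: "L \<in> BB n r c \<Longrightarrow> reduced_latin_square n L \<and> er n L = r \<and> ec n L = c" for L r c
    by (simp add: BB_def)
  have lat: "reduced_latin_square n L \<Longrightarrow> latin_square n L" for L by (simp add: reduced_latin_square_def)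
  have Nset: "{L. reduced_latin_square n L \<and> parity_type n L k m} =
     (BB n k m \<union> BB n (n - k) (n - m)) \<union> (BB n (n - k) m \<union> BB n k (n - m))"
    using ptype_iff[OF lat] by (auto simp: BB_def)
  have d: "BB n r c \<inter> BB n r' c' = {}" if "r \<noteq> r' \<or> c \<noteq> c'" for r c r' c'
    using that by (auto simp: BB_def)
  have N: "N = (b k m + b (n - k) (n - m)) + (b (n - k) m + b k (n - m))"
  proof -
    have c1: "card (BB n k m \<union> BB n (n - k) (n - m)) = b k m + b (n - k) (n - m)"
      unfolding b_def by (rule card_Un_disjoint[OF finBB finBB d]) (use kk in simp)
    have c2: "card (BB n (n - k) m \<union> BB n k (n - m)) = b (n - k) m + b k (n - m)"
      unfolding b_def by (rule card_Un_disjoint[OF finBB finBB d]) (use kk in simp)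
    have dd: "(BB n k m \<union> BB n (n - k) (n - m)) \<inter> (BB n (n - k) m \<union> BB n k (n - m)) = {}"
      using kk by (auto simp: BB_def)
    have "N = card (BB n k m \<union> BB n (n - k) (n - m)) + card (BB n (n - k) m \<union> BB n k (n - m))"
      unfolding N_def Nset by (rule card_Un_disjoint[OF _ _ dd]) (simp_all add: finBB)
    then show ?thesis using c1 c2 by simp
  qed
  obtain j where j: "n = k + j" using kn(1) le_Suc_ex by blast
  obtain i where i: "n = m + i" using kn(2) le_Suc_ex by blast
  have nk: "n - k = j" "n - m = i" using i j by simp_all
  have tt: "card (Y n k m) = t" "card (Y n j m) = t" "card (Y n k i) = t" "card (Y n j i) = t"
    using t nk by (simp_all add: t_def)
  have NN: "n * n * K * N = t * (n * n)"
  proof -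
    have "n * n * K * N = n * n * K * b k m + n * n * K * b j i + n * n * K * b j m + n * n * K * b k i"
      by (simp add: N nk algebra_simps)
    also have "\<dots> = t * k * m + t * j * i + t * j * m + t * k * i"
      using kb[of k m] kb[of j i] kb[of j m] kb[of k i] tt by simp
    also have "\<dots> = t * ((k + j) * (m + i))" by (simp add: algebra_simps)
    also have "\<dots> = t * (n * n)" using i j by simp
    finally show ?thesis .
  qed
  show ?thesis
  proof (intro conjI impI)
    assume ev: "even (k + m)"
    have Eset: "{L. reduced_latin_square n L \<and> parity_type n L k m \<and> even_latin_square n L} =
       BB n k m \<union> BB n (n - k) (n - m)"
      using ptype_iff[OF lat] even_iff[OF lat] par_aux[OF assms(1) kn] ev by (auto simp: BB_def)
    have E: "E = b k m + b (n - k) (n - m)"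
      unfolding E_def Eset b_def by (rule card_Un_disjoint[OF finBB finBB d]) (use kk in simp)
    let ?X = "k * m + (n - k) * (n - m)"
    have "n * n * K * E = n * n * K * b k m + n * n * K * b j i" by (simp add: E nk algebra_simps)
    also have "\<dots> = t * k * m + t * j * i" using kb[of k m] kb[of j i] tt by simp
    also have "\<dots> = t * ?X" using nk by (simp add: algebra_simps)
    finally have A: "n * n * K * E = t * ?X" .
    have "n * n * K * (E * (n * n)) = (n * n * K * E) * (n * n)" by (simp only: mult.assoc)
    also have "\<dots> = t * ?X * (n * n)" by (simp only: A)
    also have "\<dots> = ?X * (t * (n * n))" by (simp only: ac_simps)
    also have "\<dots> = ?X * (n * n * K * N)" by (simp only: NN)
    also have "\<dots> = n * n * K * (?X * N)" by (simp only: ac_simps)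
    finally have "n * n * K * (E * (n * n)) = n * n * K * (?X * N)" .
    then have "E * (n * n) = ?X * N" using K n3 by simp
    then have "real E * (real n * real n) = real ?X * real N" by (metis of_nat_mult)
    then show "real E = real ?X / real (n ^ 2) * real N" using n3
      by (simp add: field_simps power2_eq_square)
  next
    assume od: "odd (k + m)"
    have Eset: "{L. reduced_latin_square n L \<and> parity_type n L k m \<and> even_latin_square n L} =
       BB n (n - k) m \<union> BB n k (n - m)"
    proof (intro set_eqI iffI)
      fix L assume A: "L \<in> {L. reduced_latin_square n L \<and> parity_type n L k m \<and> even_latin_square n L}"
      then have "reduced_latin_square n L" "er n L \<in> {k, n - k}" "ec n L \<in> {m, n - m}" "even (er n L + ec n L)"
        using ptype_iff[OF lat] even_iff[OF lat] by auto
      then show "L \<in> BB n (n - k) m \<union> BB n k (n - m)"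
        using sel_odd[OF assms(1) kn od] by (auto simp: BB_def)
    next
      fix L assume A: "L \<in> BB n (n - k) m \<union> BB n k (n - m)"
      then have R: "reduced_latin_square n L" "(er n L = n - k \<and> ec n L = m) \<or> (er n L = k \<and> ec n L = n - m)"
        by (auto simp: BB_def)
      then have "er n L \<in> {k, n - k}" "ec n L \<in> {m, n - m}" by auto
      then have "even (er n L + ec n L)" using sel_odd[OF assms(1) kn od] R(2) by blast
      then show "L \<in> {L. reduced_latin_square n L \<and> parity_type n L k m \<and> even_latin_square n L}"
        using R ptype_iff[OF lat[OF R(1)]] even_iff[OF lat[OF R(1)]] by auto
    qed
    have E: "E = b (n - k) m + b k (n - m)"
      unfolding E_def Eset b_def by (rule card_Un_disjoint[OF finBB finBB d]) (use kk in simp)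
    let ?X = "k * (n - m) + m * (n - k)"
    have "n * n * K * E = n * n * K * b j m + n * n * K * b k i" by (simp add: E nk algebra_simps)
    also have "\<dots> = t * j * m + t * k * i" using kb[of j m] kb[of k i] tt by simp
    also have "\<dots> = t * ?X" using nk by (simp add: algebra_simps)
    finally have A: "n * n * K * E = t * ?X" .
    have "n * n * K * (E * (n * n)) = (n * n * K * E) * (n * n)" by (simp only: mult.assoc)
    also have "\<dots> = t * ?X * (n * n)" by (simp only: A)
    also have "\<dots> = ?X * (t * (n * n))" by (simp only: ac_simps)
    also have "\<dots> = ?X * (n * n * K * N)" by (simp only: NN)
    also have "\<dots> = n * n * K * (?X * N)" by (simp only: ac_simps)
    finally have "n * n * K * (E * (n * n)) = n * n * K * (?X * N)" .
    then have "E * (n * n) = ?X * N" using K n3 by simp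
    then have "real E * (real n * real n) = real ?X * real N" by (metis of_nat_mult)
    then show "real E = real ?X / real (n ^ 2) * real N" using n3
      by (simp add: field_simps power2_eq_square)
  qed
qed


end
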